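(* Let $s\in\{0,\pm1,\pm2\}$ and let $\psi_s$ be a smooth spin-weight-$s$ solution of the Teukolsky master equation on the Kerr exterior $r>r_+$. Set $\Psi_s=\sqrt{r^2+a^2}\,\psi_s$ and $\Phi^{(0)}_s=\mu^{-s}\Psi_s$. Then $$\widehat\Box_s\Phi_s^{(0)}=\frac{2s(r^3-3Mr^2+a^2r+a^2M)}{(r^2+a^2)^2}\hat{\mathcal V}\Phi_s^{(0)}-\frac{2(2s+1)ar}{r^2+a^2}\mathcal{L}_\eta\Phi_s^{(0)}-\Big(2s-\frac{(2s+1)\big(2(s+1)Mr^3+a^2r^2-2(s+2)a^2Mr+a^4\big)}{(r^2+a^2)^2}\Big)\Phi_s^{(0)}.$$
   Context: Fix $M>0$, $|a|<M$; Boyer–Lindquist coordinates $(t,r,\theta,\phi)$, $\Delta=r^2-2Mr+a^2$, $r_+=M+\sqrt{M^2-a^2}$, $\mu=\Delta/(r^2+a^2)$. Vector fields: $Y=\frac{(r^2+a^2)\partial_t+a\partial_\phi}{\Delta}-\partial_r$, $V=\frac{(r^2+a^2)\partial_t+a\partial_\phi}{r^2+a^2}+\mu\partial_r$, $\hat V=\mu^{-1}V$, $\hat{\mathcal V}=(r^2+a^2)\hat V$, $\mathcal{L}_\xi=\partial_t$, $\mathcal{L}_\eta=\partial_\phi$. For a complex function $\varphi$ of spin weight $s$: $\mathring{\eth}\varphi=\partial_\theta\varphi+i\csc\theta\partial_\phi\varphi-s\cot\theta\varphi$, $\mathring{\eth}'\varphi=\partial_\theta\varphi-i\csc\theta\partial_\phi\varphi+s\cot\theta\varphi$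 (here $\mathring{\eth}'$ acts with weight $s$ and $\mathring{\eth}$ with weight $s-1$ in $\mathring{\eth}\mathring{\eth}'$). Spin-weighted wave operator $\widehat\Box_s=-(r^2+a^2)YV+\mathring{\eth}\mathring{\eth}'+2a\mathcal{L}_\xi\mathcal{L}_\eta+a^2\sin^2\theta\mathcal{L}_\xi^2-2ias\cos\theta\mathcal{L}_\xi$. Teukolsky master equation, with $\Sigma=r^2+a^2\cos^2\theta$: $0=-\frac{(r^2+a^2)^2-a^2\sin^2\theta\Delta}{\Delta}\partial_t^2\psi_s+\partial_r(\Delta\partial_r\psi_s)-\frac{4aMr}{\Delta}\partial_t\partial_\phi\psi_s-\frac{a^2}{\Delta}\partial_\phi^2\psi_s+\mathring{\eth}\mathring{\eth}'\psi_s-2ias\cos\theta\partial_t\psi_s+2s[(r-M)Y-2r\partial_t]\psi_s$. *)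

theory Defs
  imports "HOL-Analysis.Analysis"
begin

fun Ck_on :: "nat \<Rightarrow> 'a::real_normed_vector set \<Rightarrow> ('a \<Rightarrow> 'b::real_normed_vector) \<Rightarrow> bool" where
  "Ck_on 0 S f = continuous_on S f"
| "Ck_on (Suc k) S f =
     (continuous_on S f \<and>
      (\<exists>f'. (\<forall>x\<in>S. (f has_derivative f' x) (at x)) \<and> (\<forall>v. Ck_on k S (\<lambda>x. f' x v))))"

definition smooth_on :: "'a::real_normed_vector set \<Rightarrow> ('a \<Rightarrow> 'b::real_normed_vector) \<Rightarrow> bool" where
  "smooth_on S f \<longleftrightarrow> (\<forall>k. Ck_on k S f)"

type_synonym sfun = "real \<Rightarrow> real \<Rightarrow> real \<Rightarrow> real \<Rightarrow> complex"

definition dt :: "sfun \<Rightarrow> sfun" where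
  "dt f = (\<lambda>t r \<theta> \<phi>. vector_derivative (\<lambda>x. f x r \<theta> \<phi>) (at t))"
definition dr :: "sfun \<Rightarrow> sfun" where
  "dr f = (\<lambda>t r \<theta> \<phi>. vector_derivative (\<lambda>x. f t x \<theta> \<phi>) (at r))"
definition dth :: "sfun \<Rightarrow> sfun" where
  "dth f = (\<lambda>t r \<theta> \<phi>. vector_derivative (\<lambda>x. f t r x \<phi>) (at \<theta>))"
definition dph :: "sfun \<Rightarrow> sfun" where
  "dph f = (\<lambda>t r \<theta> \<phi>. vector_derivative (\<lambda>x. f t r \<theta> x) (at \<phi>))"

definition Delta :: "real \<Rightarrow> real \<Rightarrow> real \<Rightarrow> real" where
  "Delta M a r = r^2 - 2*M*r + a^2"
definition rplus :: "real \<Rightarrow> real \<Rightarrow> real" where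
  "rplus M a = M + sqrt (M^2 - a^2)"
definition mu :: "real \<Rightarrow> real \<Rightarrow> real \<Rightarrow> real" where
  "mu M a r = Delta M a r / (r^2 + a^2)"

definition exterior :: "real \<Rightarrow> real \<Rightarrow> (real \<times> real \<times> real \<times> real) set" where
  "exterior M a = {(t, r, \<theta>, \<phi>). rplus M a < r \<and> 0 < \<theta> \<and> \<theta> < pi}"

definition Yop :: "real \<Rightarrow> real \<Rightarrow> sfun \<Rightarrow> sfun" where
  "Yop M a f = (\<lambda>t r \<theta> \<phi>.
     of_real ((r^2 + a^2) / Delta M a r) * dt f t r \<theta> \<phi>
     + of_real (a / Delta M a r) * dph f t r \<theta> \<phi> - dr f t r \<theta> \<phi>)"

definition Vop :: "real \<Rightarrow> real \<Rightarrow> sfun \<Rightarrow> sfun" where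
  "Vop M a f = (\<lambda>t r \<theta> \<phi>.
     dt f t r \<theta> \<phi> + of_real (a / (r^2 + a^2)) * dph f t r \<theta> \<phi>
     + of_real (mu M a r) * dr f t r \<theta> \<phi>)"

definition Vhat :: "real \<Rightarrow> real \<Rightarrow> sfun \<Rightarrow> sfun" where
  "Vhat M a f = (\<lambda>t r \<theta> \<phi>. of_real (inverse (mu M a r)) * Vop M a f t r \<theta> \<phi>)"
definition calVhat :: "real \<Rightarrow> real \<Rightarrow> sfun \<Rightarrow> sfun" where
  "calVhat M a f = (\<lambda>t r \<theta> \<phi>. of_real (r^2 + a^2) * Vhat M a f t r \<theta> \<phi>)"

definition eth :: "int \<Rightarrow> sfun \<Rightarrow> sfun" where
  "eth w f = (\<lambda>t r \<theta> \<phi>. dth f t r \<theta> \<phi> + \<i> * of_real (1 / sin \<theta>) * dph f t r \<theta> \<phi>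
                 - of_int w * of_real (cot \<theta>) * f t r \<theta> \<phi>)"
definition eth' :: "int \<Rightarrow> sfun \<Rightarrow> sfun" where
  "eth' w f = (\<lambda>t r \<theta> \<phi>. dth f t r \<theta> \<phi> - \<i> * of_real (1 / sin \<theta>) * dph f t r \<theta> \<phi>
                 + of_int w * of_real (cot \<theta>) * f t r \<theta> \<phi>)"

definition ethSq :: "int \<Rightarrow> sfun \<Rightarrow> sfun" where
  "ethSq s f = eth (s - 1) (eth' s f)"

definition BoxS :: "real \<Rightarrow> real \<Rightarrow> int \<Rightarrow> sfun \<Rightarrow> sfun" where
  "BoxS M a s f = (\<lambda>t r \<theta> \<phi>.
     - of_real (r^2 + a^2) * Yop M a (Vop M a f) t r \<theta> \<phi>
     + ethSq s f t r \<theta> \<phi>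
     + of_real (2 * a) * dt (dph f) t r \<theta> \<phi>
     + of_real (a^2 * (sin \<theta>)^2) * dt (dt f) t r \<theta> \<phi>
     - 2 * \<i> * of_real a * of_int s * of_real (cos \<theta>) * dt f t r \<theta> \<phi>)"

definition Teuk :: "real \<Rightarrow> real \<Rightarrow> int \<Rightarrow> sfun \<Rightarrow> sfun" where
  "Teuk M a s f = (\<lambda>t r \<theta> \<phi>.
     - of_real (((r^2 + a^2)^2 - a^2 * (sin \<theta>)^2 * Delta M a r) / Delta M a r) * dt (dt f) t r \<theta> \<phi>
     + dr (\<lambda>t r \<theta> \<phi>. of_real (Delta M a r) * dr f t r \<theta> \<phi>) t r \<theta> \<phi>
     - of_real (4 * a * M * r / Delta M a r) * dt (dph f) t r \<theta> \<phi>
     - of_real (a^2 / Delta M a r) * dph (dph f) t r \<theta> \<phi>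
     + ethSq s f t r \<theta> \<phi>
     - 2 * \<i> * of_real a * of_int s * of_real (cos \<theta>) * dt f t r \<theta> \<phi>
     + 2 * of_int s * (of_real (r - M) * Yop M a f t r \<theta> \<phi> - of_real (2 * r) * dt f t r \<theta> \<phi>))"

end

theory Submission
  imports Defs
begin


definition L1 :: "real \<Rightarrow> real \<Rightarrow> int \<Rightarrow> real \<Rightarrow> real" where
  "L1 M a s x = - of_int s * (2*x - 2*M) / Delta M a x + (2 * of_int s + 1) * x / (x^2 + a^2)"
definition L1d :: "real \<Rightarrow> real \<Rightarrow> int \<Rightarrow> real \<Rightarrow> real" where
  "L1d M a s x = - of_int s * (2 * Delta M a x - (2*x - 2*M)^2) / (Delta M a x)^2
     + (2 * of_int s + 1) * ((x^2 + a^2) - 2*x^2) / (x^2 + a^2)^2"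

lemma Delta_pos:
  assumes "\<bar>a\<bar> < M" "rplus M a < x"
  shows "Delta M a x > 0" "x > 0"
proof -
  have "\<bar>a\<bar>^2 < M^2" by (rule power_strict_mono) (use assms in auto)
  then have h: "M^2 - a^2 > 0" by simp
  have s0: "sqrt (M^2 - a^2) \<ge> 0" using h by simp
  have "x - M > sqrt (M^2 - a^2)" using assms(2) unfolding rplus_def by simp
  then have "(sqrt (M^2 - a^2))^2 < (x - M)^2" using s0 by (intro power_strict_mono) auto
  then have "(x-M)^2 > M^2 - a^2" using h by simp
  then show "Delta M a x > 0" unfolding Delta_def by (simp add: power2_eq_square algebra_simps)
  show "x > 0" using assms s0 abs_ge_zero[of a] unfolding rplus_def by linarith
qed

lemma Delta_deriv_eq:
  "E = 2*x - 2*M \<Longrightarrow> (Delta M a has_real_derivative E) (at x within S)"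
  unfolding Delta_def[abs_def] by (auto intro!: derivative_eq_intros)

definition Afn :: "real \<Rightarrow> real \<Rightarrow> real" where "Afn a y = y^2 + a^2"

lemma Afn_deriv_eq:
  "E = 2*x \<Longrightarrow> (Afn a has_real_derivative E) (at x within S)"
  unfolding Afn_def[abs_def] by (auto intro!: derivative_eq_intros)

lemma gg_deriv:
  assumes "\<bar>a\<bar> < M" "rplus M a < x"
  shows "((\<lambda>r. mu M a r powi (- s) * sqrt (r^2 + a^2)) has_real_derivative
           (mu M a x powi (- s) * sqrt (x^2 + a^2)) * L1 M a s x) (at x)"
proof -
  define k where "k y = - of_int s * (ln (Delta M a y) - ln (Afn a y)) + ln (Afn a y) / 2" for y
  have eq: "mu M a y powi (- s) * sqrt (y^2 + a^2) = exp (k y)" if "y \<in> {rplus M a <..}" for y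
  proof -
    have D: "Delta M a y > 0" "y > 0" using Delta_pos assms that by auto
    have A: "y^2 + a^2 > 0" using D by (simp add: add_pos_nonneg)
    have m: "mu M a y > 0" using D A unfolding mu_def by simp
    have "mu M a y powi (- s) = exp (of_int (-s) * ln (mu M a y))"
      using powr_real_of_int'[of "mu M a y" "-s"] m by (simp add: powr_def)
    moreover have "sqrt (y^2 + a^2) = exp (ln (y^2 + a^2) / 2)"
      using powr_half_sqrt[of "y^2+a^2"] A D(2) by (simp add: powr_def)
    ultimately show ?thesis unfolding k_def mu_def Afn_def using D A by (simp add: exp_add[symmetric] ln_div)
  qed
  have D: "Delta M a x > 0" "x > 0" using Delta_pos assms by auto
  have A: "x^2 + a^2 > 0" using D by (simp add: add_pos_nonneg)
  have "(k has_real_derivative L1 M a s x) (at x)"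
    unfolding k_def L1_def Afn_def[symmetric]
    using D A unfolding Afn_def[symmetric]
    apply (auto intro!: derivative_eq_intros Delta_deriv_eq Afn_deriv_eq)
    apply (simp add: field_simps)
    done
  then have "((\<lambda>y. exp (k y)) has_real_derivative exp (k x) * L1 M a s x) (at x)"
    by (auto intro!: derivative_eq_intros)
  then have "((\<lambda>y. exp (k y)) has_real_derivative (mu M a x powi (- s) * sqrt (x^2 + a^2)) * L1 M a s x) (at x)"
    using eq[of x] assms(2) by simp
  then show ?thesis
    by (rule has_field_derivative_transform_within_open[where S="{rplus M a <..}"]) (use assms(2) eq in auto)
qed

lemma L1_deriv:
  assumes "\<bar>a\<bar> < M" "rplus M a < x"
  shows "(L1 M a s has_real_derivative L1d M a s x) (at x)"
proof -
  have D: "Delta M a x > 0" "x > 0" using Delta_pos assms by auto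
  have A: "Afn a x > 0" using D unfolding Afn_def by (simp add: add_pos_nonneg)
  show ?thesis
    unfolding L1_def[abs_def] L1d_def Afn_def[symmetric] using D A
    apply (auto intro!: derivative_eq_intros Delta_deriv_eq Afn_deriv_eq)
    apply (simp add: field_simps)
    apply (simp add: Afn_def algebra_simps power2_eq_square)
    done
qed



lemma slice_vd:
  fixes F :: "'a::real_normed_vector \<Rightarrow> 'b::real_normed_vector"
  assumes "(F has_derivative D) (at (x + s *\<^sub>R u))"
  shows "((\<lambda>s. F (x + s *\<^sub>R u)) has_vector_derivative D u) (at s)"
proof -
  have l: "linear D" using assms has_derivative_linear by blast
  have "((\<lambda>s. x + s *\<^sub>R u) has_derivative (\<lambda>k. k *\<^sub>R u)) (at s)"
    by (auto intro!: derivative_eq_intros)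
  from has_derivative_compose[OF this assms]
  have "((\<lambda>s. F (x + s *\<^sub>R u)) has_derivative (\<lambda>k. D (k *\<^sub>R u))) (at s)" by simp
  then show ?thesis unfolding has_vector_derivative_def
    using linear_scale[OF l] by simp
qed

lemma scale_aux:
  fixes X c :: "'b::real_normed_vector"
  assumes "(h::real) \<noteq> 0" "norm (X - (h^2) *\<^sub>R c) < h^2 * e"
  shows "norm ((1/h^2) *\<^sub>R X - c) < e"
proof -
  have hp: "h^2 > 0" using assms by simp
  have "(1/h^2) *\<^sub>R X - c = (1/h^2) *\<^sub>R (X - (h^2) *\<^sub>R c)"
    using assms by (simp add: scaleR_diff_right)
  then have "norm ((1/h^2) *\<^sub>R X - c) = norm (X - (h^2) *\<^sub>R c) / h^2" by simp
  also have "\<dots> < e" using assms hp by (simp add: divide_less_eq mult.commute)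
  finally show ?thesis .
qed

lemma mixed_lim:
  fixes F :: "'a::real_normed_vector \<Rightarrow> 'b::real_normed_vector"
  assumes S: "open S" "x \<in> S"
    and F: "\<And>y. y \<in> S \<Longrightarrow> (F has_derivative F' y) (at y)"
    and Gu: "((\<lambda>y. F' y u) has_derivative Gu) (at x)"
  shows "((\<lambda>h. (1/h^2) *\<^sub>R (F (x + h *\<^sub>R u + h *\<^sub>R v) - F (x + h *\<^sub>R u) - F (x + h *\<^sub>R v) + F x)) \<longlongrightarrow> Gu v) (at 0)"
proof -
  have blG: "bounded_linear Gu" using Gu has_derivative_bounded_linear by blast
  define K where "K = norm u + norm v + 1"
  have K: "K > 0" unfolding K_def by (simp add: add_nonneg_pos)
  show ?thesis unfolding LIM_eq
  proof (intro allI impI)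
    fix e :: real assume e: "e > 0"
    define e' where "e' = e / (8*K)"
    have e': "e' > 0" using e K by (simp add: e'_def)
    obtain d1 where d1: "d1 > 0" "\<And>y. norm (y - x) < d1 \<Longrightarrow> norm (F' y u - F' x u - Gu (y - x)) \<le> e' * norm (y - x)"
      using Gu[unfolded has_derivative_at_alt] e' by blast
    obtain d2 where d2: "d2 > 0" "ball x d2 \<subseteq> S" using open_contains_ball S by blast
    define d where "d = min d1 d2"
    have d: "d > 0" using d1 d2 by (simp add: d_def)
    show "\<exists>s>0. \<forall>h. h \<noteq> 0 \<and> norm (h - 0) < s \<longrightarrow>
       norm ((1/h^2) *\<^sub>R (F (x + h *\<^sub>R u + h *\<^sub>R v) - F (x + h *\<^sub>R u) - F (x + h *\<^sub>R v) + F x) - Gu v) < e"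
    proof (intro exI[of _ "d/K"] conjI allI impI)
      show "d / K > 0" using d K by simp
      fix h :: real assume h: "h \<noteq> 0 \<and> norm (h - 0) < d / K"
      have hK: "\<bar>h\<bar> * K < d" using h K by (simp add: field_simps)
      have near1: "norm ((x + \<sigma> *\<^sub>R u + h *\<^sub>R v) - x) \<le> \<bar>h\<bar> * K" if "\<bar>\<sigma>\<bar> \<le> \<bar>h\<bar>" for \<sigma>
      proof -
        have "norm ((x + \<sigma> *\<^sub>R u + h *\<^sub>R v) - x) \<le> \<bar>\<sigma>\<bar> * norm u + \<bar>h\<bar> * norm v"
          using norm_triangle_ineq[of "\<sigma> *\<^sub>R u" "h *\<^sub>R v"] by simp
        also have "\<dots> \<le> \<bar>h\<bar> * norm u + \<bar>h\<bar> * norm v"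
          using that by (simp add: mult_right_mono)
        also have "\<dots> \<le> \<bar>h\<bar> * K" unfolding K_def by (simp add: algebra_simps)
        finally show ?thesis .
      qed
      have near2: "norm ((x + \<sigma> *\<^sub>R u) - x) \<le> \<bar>h\<bar> * K" if "\<bar>\<sigma>\<bar> \<le> \<bar>h\<bar>" for \<sigma>
      proof -
        have "norm ((x + \<sigma> *\<^sub>R u) - x) \<le> \<bar>h\<bar> * norm u" using that by (simp add: mult_right_mono)
        also have "\<dots> \<le> \<bar>h\<bar> * K" unfolding K_def by (simp add: mult_left_mono)
        finally show ?thesis .
      qed
      have inS: "y \<in> S" if "norm (y - x) \<le> \<bar>h\<bar> * K" for y
        using that hK d2 unfolding d_def by (auto simp: dist_norm norm_minus_commute)
      have lin: "norm (F' y u - F' x u - Gu (y - x)) \<le> e' * (\<bar>h\<bar> * K)" if "norm (y - x) \<le> \<bar>h\<bar> * K" for y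
      proof -
        have "norm (y - x) < d1" using that hK unfolding d_def by linarith
        then have "norm (F' y u - F' x u - Gu (y - x)) \<le> e' * norm (y - x)" by (rule d1(2))
        also have "\<dots> \<le> e' * (\<bar>h\<bar> * K)" using that e' by (simp add: mult_left_mono)
        finally show ?thesis .
      qed
      define f where "f \<sigma> = F (x + \<sigma> *\<^sub>R u + h *\<^sub>R v) - F (x + \<sigma> *\<^sub>R u) - \<sigma> *\<^sub>R (h *\<^sub>R Gu v)" for \<sigma>
      define f' where "f' \<sigma> = F' (x + \<sigma> *\<^sub>R u + h *\<^sub>R v) u - F' (x + \<sigma> *\<^sub>R u) u - h *\<^sub>R Gu v" for \<sigma>
      have der: "(f has_vector_derivative f' \<sigma>) (at \<sigma>)" if "\<bar>\<sigma>\<bar> \<le> \<bar>h\<bar>" for \<sigma>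
      proof -
        have a1: "(F has_derivative F' (x + h *\<^sub>R v + \<sigma> *\<^sub>R u)) (at (x + h *\<^sub>R v + \<sigma> *\<^sub>R u))"
          using F inS near1[OF that] by (simp add: add_ac)
        have a2: "(F has_derivative F' (x + \<sigma> *\<^sub>R u)) (at (x + \<sigma> *\<^sub>R u))"
          using F inS near2[OF that] by simp
        have "((\<lambda>s. F (x + h *\<^sub>R v + s *\<^sub>R u) - F (x + s *\<^sub>R u) - s *\<^sub>R (h *\<^sub>R Gu v)) has_vector_derivative
              (F' (x + h *\<^sub>R v + \<sigma> *\<^sub>R u) u - F' (x + \<sigma> *\<^sub>R u) u - (h *\<^sub>R Gu v))) (at \<sigma>)"
        proof (intro has_vector_derivative_diff slice_vd[OF a1] slice_vd[OF a2])
          show "((\<lambda>s. s *\<^sub>R (h *\<^sub>R Gu v)) has_vector_derivative h *\<^sub>R Gu v) (at \<sigma>)"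
            by (auto simp: has_vector_derivative_def intro!: derivative_eq_intros)
        qed
        then show ?thesis unfolding f_def f'_def by (simp add: add_ac)
      qed
      have bnd: "norm (f' \<sigma>) \<le> 2 * (e' * (\<bar>h\<bar> * K))" if "\<bar>\<sigma>\<bar> \<le> \<bar>h\<bar>" for \<sigma>
      proof -
        let ?y1 = "x + \<sigma> *\<^sub>R u + h *\<^sub>R v" and ?y2 = "x + \<sigma> *\<^sub>R u"
        have "Gu (?y1 - x) - Gu (?y2 - x) = Gu (h *\<^sub>R v)"
          using linear_diff[OF bounded_linear.linear[OF blG], of "?y1 - x" "?y2 - x", symmetric] by simp
        then have eq: "f' \<sigma> = (F' ?y1 u - F' x u - Gu (?y1 - x)) - (F' ?y2 u - F' x u - Gu (?y2 - x))"
          unfolding f'_def using linear_scale[OF bounded_linear.linear[OF blG]] by (simp add: algebra_simps)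
        show ?thesis unfolding eq
          using norm_triangle_ineq4[of "F' ?y1 u - F' x u - Gu (?y1 - x)" "F' ?y2 u - F' x u - Gu (?y2 - x)"]
            lin[OF near1[OF that]] lin[OF near2[OF that]] by linarith
      qed
      have seg: "\<bar>\<sigma>\<bar> \<le> \<bar>h\<bar>" if "\<sigma> \<in> closed_segment 0 h" for \<sigma>
        using that by (auto simp: closed_segment_eq_real_ivl split: if_splits)
      have mvt: "norm (f h - f 0 - (h - 0) *\<^sub>R f' 0) \<le> norm (h - 0) * (4 * (e' * (\<bar>h\<bar> * K)))"
      proof (rule vector_differentiable_bound_linearization[where S="closed_segment 0 h"])
        show "\<And>\<sigma>. \<sigma> \<in> closed_segment 0 h \<Longrightarrow> (f has_vector_derivative f' \<sigma>) (at \<sigma> within closed_segment 0 h)"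
          using der seg has_vector_derivative_at_within by blast
        show "\<And>\<sigma>. \<sigma> \<in> closed_segment 0 h \<Longrightarrow> norm (f' \<sigma> - f' 0) \<le> 4 * (e' * (\<bar>h\<bar> * K))"
        proof -
          fix \<sigma> assume "\<sigma> \<in> closed_segment 0 h"
          then have "\<bar>\<sigma>\<bar> \<le> \<bar>h\<bar>" by (rule seg)
          then show "norm (f' \<sigma> - f' 0) \<le> 4 * (e' * (\<bar>h\<bar> * K))"
            using bnd[of \<sigma>] bnd[of 0] norm_triangle_ineq4[of "f' \<sigma>" "f' 0"] by simp
        qed
      qed auto
      have b0: "norm (h *\<^sub>R f' 0) \<le> \<bar>h\<bar> * (2 * (e' * (\<bar>h\<bar> * K)))"
        using bnd[of 0] by (simp add: mult_left_mono)
      have "f h - f 0 = (F (x + h *\<^sub>R u + h *\<^sub>R v) - F (x + h *\<^sub>R u) - F (x + h *\<^sub>R v) + F x) - (h^2) *\<^sub>R Gu v"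
        unfolding f_def by (simp add: algebra_simps power2_eq_square)
      then have "norm ((F (x + h *\<^sub>R u + h *\<^sub>R v) - F (x + h *\<^sub>R u) - F (x + h *\<^sub>R v) + F x) - (h^2) *\<^sub>R Gu v)
           \<le> \<bar>h\<bar> * (4 * (e' * (\<bar>h\<bar> * K))) + \<bar>h\<bar> * (2 * (e' * (\<bar>h\<bar> * K)))"
      proof -
        have "norm (f h - f 0) \<le> norm (f h - f 0 - h *\<^sub>R f' 0) + norm (h *\<^sub>R f' 0)"
          using norm_triangle_ineq[of "f h - f 0 - h *\<^sub>R f' 0" "h *\<^sub>R f' 0"] by simp
        moreover have "norm (f h - f 0 - h *\<^sub>R f' 0) \<le> \<bar>h\<bar> * (4 * (e' * (\<bar>h\<bar> * K)))" using mvt by simp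
        ultimately have "norm (f h - f 0) \<le> \<bar>h\<bar> * (4 * (e' * (\<bar>h\<bar> * K))) + \<bar>h\<bar> * (2 * (e' * (\<bar>h\<bar> * K)))"
          using b0 by linarith
        then show ?thesis using \<open>f h - f 0 = _\<close> by metis
      qed
      also have "\<dots> = (h^2) * (e * 3 / 4)" using K by (simp add: e'_def field_simps power2_eq_square)
      also have "\<dots> < (h^2) * e" using h e by simp
      finally have m: "norm ((F (x + h *\<^sub>R u + h *\<^sub>R v) - F (x + h *\<^sub>R u) - F (x + h *\<^sub>R v) + F x) - (h^2) *\<^sub>R Gu v) < h^2 * e" .
      show "norm ((1/h^2) *\<^sub>R (F (x + h *\<^sub>R u + h *\<^sub>R v) - F (x + h *\<^sub>R u) - F (x + h *\<^sub>R v) + F x) - Gu v) < e"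
        using scale_aux[OF _ m] h by blast
    qed
  qed
qed

lemma mixed_sym:
  fixes F :: "'a::real_normed_vector \<Rightarrow> 'b::real_normed_vector"
  assumes S: "open S" "x \<in> S"
    and F: "\<And>y. y \<in> S \<Longrightarrow> (F has_derivative F' y) (at y)"
    and Gu: "((\<lambda>y. F' y u) has_derivative Gu) (at x)"
    and Gv: "((\<lambda>y. F' y v) has_derivative Gv) (at x)"
  shows "Gu v = Gv u"
proof -
  have 1: "((\<lambda>h. (1/h^2) *\<^sub>R (F (x + h *\<^sub>R u + h *\<^sub>R v) - F (x + h *\<^sub>R u) - F (x + h *\<^sub>R v) + F x)) \<longlongrightarrow> Gu v) (at 0)"
    by (rule mixed_lim[OF S F Gu])
  have 2: "((\<lambda>h. (1/h^2) *\<^sub>R (F (x + h *\<^sub>R v + h *\<^sub>R u) - F (x + h *\<^sub>R v) - F (x + h *\<^sub>R u) + F x)) \<longlongrightarrow> Gv u) (at 0)"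
    by (rule mixed_lim[OF S F Gv])
  have "(\<lambda>h. (1/h^2) *\<^sub>R (F (x + h *\<^sub>R v + h *\<^sub>R u) - F (x + h *\<^sub>R v) - F (x + h *\<^sub>R u) + F x))
      = (\<lambda>h. (1/h^2) *\<^sub>R (F (x + h *\<^sub>R u + h *\<^sub>R v) - F (x + h *\<^sub>R u) - F (x + h *\<^sub>R v) + F x))"
    by (simp add: algebra_simps)
  with 2 have "((\<lambda>h. (1/h^2) *\<^sub>R (F (x + h *\<^sub>R u + h *\<^sub>R v) - F (x + h *\<^sub>R u) - F (x + h *\<^sub>R v) + F x)) \<longlongrightarrow> Gv u) (at (0::real))"
    by simp
  from tendsto_unique[OF _ 1 this] show ?thesis by simp
qed



lemma slice_t:
  fixes H :: "real \<times> real \<times> real \<times> real \<Rightarrow> 'b::real_normed_vector"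
  assumes "(H has_derivative D) (at (t,r,th,ph))"
  shows "((\<lambda>x. H (x,r,th,ph)) has_vector_derivative D (1,0,0,0)) (at t)"
  using slice_vd[of H D "(0,r,th,ph)" t "(1,0,0,0)"] assms by simp

lemma slice_r:
  fixes H :: "real \<times> real \<times> real \<times> real \<Rightarrow> 'b::real_normed_vector"
  assumes "(H has_derivative D) (at (t,r,th,ph))"
  shows "((\<lambda>x. H (t,x,th,ph)) has_vector_derivative D (0,1,0,0)) (at r)"
  using slice_vd[of H D "(t,0,th,ph)" r "(0,1,0,0)"] assms by simp

lemma slice_th:
  fixes H :: "real \<times> real \<times> real \<times> real \<Rightarrow> 'b::real_normed_vector"
  assumes "(H has_derivative D) (at (t,r,th,ph))"
  shows "((\<lambda>x. H (t,r,x,ph)) has_vector_derivative D (0,0,1,0)) (at th)"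
  using slice_vd[of H D "(t,r,0,ph)" th "(0,0,1,0)"] assms by simp

lemma slice_ph:
  fixes H :: "real \<times> real \<times> real \<times> real \<Rightarrow> 'b::real_normed_vector"
  assumes "(H has_derivative D) (at (t,r,th,ph))"
  shows "((\<lambda>x. H (t,r,th,x)) has_vector_derivative D (0,0,0,1)) (at ph)"
  using slice_vd[of H D "(t,r,th,0)" ph "(0,0,0,1)"] assms by simp

lemma vd_local:
  assumes "(g has_vector_derivative D) (at x0)" "open U" "x0 \<in> U" "\<And>x. x \<in> U \<Longrightarrow> f x = g x"
  shows "vector_derivative f (at x0) = D"
proof -
  have "(f has_vector_derivative D) (at x0)"
    using has_vector_derivative_transform_within_open[OF assms(1-3)] assms(4) by metis
  then show ?thesis by (rule vector_derivative_at)
qed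

lemma vd_all:
  assumes "(g has_vector_derivative D) (at x0)" "\<And>x. f x = g x"
  shows "vector_derivative f (at x0) = D"
  using vd_local[OF assms(1) open_UNIV] assms(2) by blast

lemma mu_deriv:
  assumes "x > 0"
  shows "(mu M a has_real_derivative ((2*x-2*M)*(x^2+a^2) - Delta M a x*(2*x))/(x^2+a^2)^2) (at x)"
proof -
  have A: "Afn a x > 0" using assms unfolding Afn_def by (simp add: add_pos_nonneg)
  have e: "mu M a = (\<lambda>y. Delta M a y / Afn a y)" unfolding mu_def Afn_def by auto
  show ?thesis unfolding e Afn_def[symmetric] using A
    by (auto intro!: derivative_eq_intros Delta_deriv_eq Afn_deriv_eq simp: power2_eq_square field_simps)
qed

lemma c_deriv:
  assumes "x > 0"
  shows "((\<lambda>y. a / (y^2+a^2)) has_real_derivative (-2*a*x/(x^2+a^2)^2)) (at x)"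
proof -
  have A: "Afn a x > 0" using assms unfolding Afn_def by (simp add: add_pos_nonneg)
  show ?thesis unfolding Afn_def[symmetric] using A
    by (auto intro!: derivative_eq_intros Afn_deriv_eq simp: power2_eq_square field_simps)
qed

lemma vd_all2:
  assumes "(g has_vector_derivative D) (at x0)" "\<And>x. f x = g x" "D = D'"
  shows "vector_derivative f (at x0) = D'"
  using vd_all[OF assms(1,2)] assms(3) by simp

lemma vd_local2:
  assumes "(g has_vector_derivative D) (at x0)" "open U" "x0 \<in> U" "\<And>x. x \<in> U \<Longrightarrow> f x = g x" "D = D'"
  shows "vector_derivative f (at x0) = D'"
  using vd_local[OF assms(1-4)] assms(5) by simp

lemma vd_scale:
  fixes f g h :: "real \<Rightarrow> 'a::real_normed_algebra"
  assumes "(g has_vector_derivative D) (at x0)" "open U" "x0 \<in> U"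
    "\<And>x. x \<in> U \<Longrightarrow> h x = g x" "\<And>x. x \<in> U \<Longrightarrow> f x = c * h x"
  shows "vector_derivative f (at x0) = c * vector_derivative h (at x0)"
proof -
  have "vector_derivative h (at x0) = D" by (rule vd_local[OF assms(1-3)]) (use assms(4) in auto)
  moreover have "vector_derivative f (at x0) = c * D"
    by (rule vd_local[OF has_vector_derivative_mult_right[OF assms(1)] assms(2,3)]) (use assms(4,5) in auto)
  ultimately show ?thesis by simp
qed

lemma final_alg:
  fixes R a M sv S C gz wz pa pb pd qaa qab qad qbb qbd qdd E AA DD LLa LLad gy gx V dtV dphV drV Box RHS :: complex
  assumes D: "DD \<noteq> 0" and A: "AA \<noteq> 0" and eA: "AA = R^2 + a^2" and eD: "DD = R^2 - 2 * M *  R + a^2"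
  and hL1: "LLa = -sv * (2 *  R-2 * M)/DD + (2 * sv+1) *  R/AA"
  and hL1d: "LLad = -sv * (2 * DD-(2 *  R-2 * M)^2)/DD^2 + (2 * sv+1) * (AA-2 *  R^2)/AA^2"
  and hg1: "gy = gz * LLa" and hg2: "gx = gy * LLa + gz * LLad"
  and hV: "V = gz * pa + (a/AA) * (gz * pd) + (DD/AA) * (gz * pb + gy * wz)"
  and hdtV: "dtV = gz * qaa + (a/AA) * (gz * qad) + (DD/AA) * (gz * qab + gy * pa)"
  and hdphV: "dphV = gz * qad + (a/AA) * (gz * qdd) + (DD/AA) * (gz * qbd + gy * pd)"
  and hdrV: "drV = (gz * qab + gy * pa) + ((a/AA) * (gz * qbd + gy * pd) + (-2 * a *  R/AA^2) * (gz * pd))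
     + ((DD/AA) * ((gz * qbb + gy * pb) + (gy * pb + gx * wz)) + (((2 *  R-2 * M) * AA-DD * 2 *  R)/AA^2) * (gz * pb + gy * wz))"
  and hBox: "Box = -AA * ((AA/DD) * dtV + (a/DD) * dphV - drV) + gz * E + 2 * a * (gz * qad) + a^2 * S^2 * (gz * qaa) - 2 * \<i> * a * sv * C * (gz * pa)"
  and hRHS: "RHS = (2 * sv * (R^3-3 * M *  R^2+a^2 *  R+a^2 * M)/AA^2)  *  (AA * (AA/DD) * V) - (2 * (2 * sv+1) * a *  R/AA) * (gz * pd)
     - (2 * sv-(2 * sv+1) * (2 * (sv+1) * M *  R^3+a^2 *  R^2-2 * (sv+2) * a^2 * M *  R+a^4)/AA^2) * (gz * wz)"
  and hT: "-((AA^2-a^2 * S^2 * DD)/DD) * qaa + (DD * qbb+(2 *  R-2 * M) * pb) - (4 * a * M *  R/DD) * qad - (a^2/DD) * qdd + E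
     - 2 * \<i> * a * sv * C * pa + 2 * sv * ((R-M) * ((AA/DD) * pa+(a/DD) * pd-pb) - 2 *  R * pa) = 0"
  shows "Box = RHS"
proof -
  define K where "K = 2 * sv * (R^3-3 * M *  R^2+a^2 *  R+a^2 * M)/AA^2"
  define Q where "Q = AA * (AA/DD)"
  define N where "N = 2 * sv-(2 * sv+1) * (2 * (sv+1) * M *  R^3+a^2 *  R^2-2 * (sv+2) * a^2 * M *  R+a^4)/AA^2"
  define B where "B = 2 * (2 * sv+1) * a *  R/AA"
  define mu where "mu = DD/AA"
  define c where "c = a/AA"
  define cp where "cp = -2 * a *  R/AA^2"
  define mup where "mup = ((2 *  R-2 * M) * AA-DD * 2 *  R)/AA^2"
  define T where "T = -((AA^2-a^2 * S^2 * DD)/DD) * qaa + (DD * qbb+(2 *  R-2 * M) * pb) - (4 * a * M *  R/DD) * qad - (a^2/DD) * qdd + E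
     - 2 * \<i> * a * sv * C * pa + 2 * sv * ((R-M) * ((AA/DD) * pa+(a/DD) * pd-pb) - 2 *  R * pa)"
  have step1: "Box - RHS - gz  *  T
     = gz  *  ( (-AA * (AA/DD) + a^2 * S^2 + ((AA^2-a^2 * S^2 * DD)/DD))  *  qaa
            + (-AA * (AA/DD) * c - AA * (a/DD) + 2 * a + 4 * a * M *  R/DD)  *  qad
            + (-AA * (AA/DD) * mu + AA)  *  qab
            + (-AA * (a/DD) * c + a^2/DD)  *  qdd
            + (-AA * (a/DD) * mu + AA * c)  *  qbd
            + (AA * mu - DD)  *  qbb
            + (-AA * (AA/DD) * mu * LLa + AA * LLa - K * Q - 2 * sv * ((R-M) * (AA/DD) - 2 *  R))  *  pa
            + (-AA * (a/DD) * mu * LLa + AA * (c * LLa + cp) - K * Q * c + B - 2 * sv * (R-M) * (a/DD))  *  pd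
            + (AA * (mu * (2 * LLa) + mup) - K * Q * mu - ((2 *  R-2 * M) - 2 * sv * (R-M)))  *  pb
            + (AA * (mu * (LLa * LLa+LLad) + mup * LLa) - K * Q * mu * LLa + N)  *  wz)"
    unfolding hBox hRHS hV hdtV hdphV hdrV hg2 hg1 T_def K_def Q_def N_def B_def mu_def c_def cp_def mup_def
    by (simp add: algebra_simps diff_divide_distrib add_divide_distrib)
  have c11: "-AA * (AA/DD) + a^2 * S^2 + ((AA^2-a^2 * S^2 * DD)/DD) = 0" using D A apply (simp add: field_simps) apply (simp add: eA eD) by algebra
  have c14: "-AA * (AA/DD) * c - AA * (a/DD) + 2 * a + 4 * a * M *  R/DD = 0" unfolding c_def using D A apply (simp add: field_simps) apply (simp add: eA eD) by algebra
  have c12: "-AA * (AA/DD) * mu + AA = 0" unfolding mu_def using D A by (simp add: field_simps)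
  have c44: "-AA * (a/DD) * c + a^2/DD = 0" unfolding c_def using D A by (simp add: field_simps power2_eq_square)
  have c24: "-AA * (a/DD) * mu + AA * c = 0" unfolding c_def mu_def using D A by (simp add: field_simps)
  have c22: "AA * mu - DD = 0" unfolding mu_def using D A by (simp add: field_simps)
  have cp1: "-AA * (AA/DD) * mu * LLa + AA * LLa - K * Q - 2 * sv * ((R-M) * (AA/DD) - 2 *  R) = 0"
    unfolding mu_def K_def Q_def hL1 using D A apply (simp add: field_simps) apply (simp add: eA eD) by algebra
  have cp4: "-AA * (a/DD) * mu * LLa + AA * (c * LLa + cp) - K * Q * c + B - 2 * sv * (R-M) * (a/DD) = 0"
    unfolding mu_def K_def Q_def c_def cp_def B_def hL1 using D A apply (simp add: field_simps) apply (simp add: eA eD) by algebra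
  have cp2: "AA * (mu * (2 * LLa) + mup) - K * Q * mu - ((2 *  R-2 * M) - 2 * sv * (R-M)) = 0"
    unfolding mu_def K_def Q_def mup_def hL1 using D A apply (simp add: field_simps) apply (simp add: eA eD) by algebra
  have cw: "AA * (mu * (LLa * LLa+LLad) + mup * LLa) - K * Q * mu * LLa + N = 0"
    unfolding mu_def K_def Q_def mup_def N_def hL1 hL1d using D A apply (simp add: field_simps) apply (simp add: eA eD) by algebra
  have "Box - RHS - gz  *  T = 0"
    unfolding step1 c11 c14 c12 c44 c24 c22 cp1 cp4 cp2 cw by simp
  moreover have "T = 0" using hT unfolding T_def .
  ultimately show ?thesis by simp
qed


theorem proposition3p11:
  fixes M a :: real and s :: int and \<psi> :: sfun
  assumes "M > 0" and "\<bar>a\<bar> < M"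
    and "s \<in> {-2, -1, 0, 1, 2}"
    and "smooth_on (exterior M a) (\<lambda>(t, r, \<theta>, \<phi>). \<psi> t r \<theta> \<phi>)"
    and "\<forall>(t, r, \<theta>, \<phi>) \<in> exterior M a. Teuk M a s \<psi> t r \<theta> \<phi> = 0"
  defines "\<Phi> \<equiv> (\<lambda>t r \<theta> \<phi>. of_real ((mu M a r powi (- s)) * sqrt (r^2 + a^2)) * \<psi> t r \<theta> \<phi>)"
  shows "\<forall>(t, r, \<theta>, \<phi>) \<in> exterior M a.
     BoxS M a s \<Phi> t r \<theta> \<phi> =
       of_real (2 * of_int s * (r^3 - 3*M*r^2 + a^2*r + a^2*M) / (r^2 + a^2)^2) * calVhat M a \<Phi> t r \<theta> \<phi>
     - of_real (2 * (2 * of_int s + 1) * a * r / (r^2 + a^2)) * dph \<Phi> t r \<theta> \<phi>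
     - of_real (2 * of_int s - (2 * of_int s + 1) *
          (2 * (of_int s + 1) * M * r^3 + a^2 * r^2 - 2 * (of_int s + 2) * a^2 * M * r + a^4)
          / (r^2 + a^2)^2) * \<Phi> t r \<theta> \<phi>"
proof -
  define E where "E = exterior M a"
  define F :: "real \<times> real \<times> real \<times> real \<Rightarrow> complex" where "F = (\<lambda>(t, r, \<theta>, \<phi>). \<psi> t r \<theta> \<phi>)"
  have memE: "\<And>t r \<theta> \<phi>. (t,r,\<theta>,\<phi>) \<in> E \<longleftrightarrow> rplus M a < r \<and> 0 < \<theta> \<and> \<theta> < pi"
    by (simp add: E_def exterior_def)
  have openE: "open E"
  proof -
    have "E = {y. rplus M a < fst (snd y)} \<inter> ({y. 0 < fst (snd (snd y))} \<inter> {y. fst (snd (snd y)) < pi})"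
      by (auto simp: E_def exterior_def)
    moreover have "open {y::real\<times>real\<times>real\<times>real. rplus M a < fst (snd y)}"
      by (intro open_Collect_less continuous_intros)
    moreover have "open {y::real\<times>real\<times>real\<times>real. 0 < fst (snd (snd y))}"
      by (intro open_Collect_less continuous_intros)
    moreover have "open {y::real\<times>real\<times>real\<times>real. fst (snd (snd y)) < pi}"
      by (intro open_Collect_less continuous_intros)
    ultimately show ?thesis by (metis open_Int)
  qed
  have "Ck_on 2 E F" using assms(4) unfolding smooth_on_def E_def F_def by blast
  then obtain F' where F'1: "\<And>y. y \<in> E \<Longrightarrow> (F has_derivative F' y) (at y)"
      and F'2: "\<And>v. Ck_on 1 E (\<lambda>y. F' y v)"
    by (auto simp: numeral_2_eq_2)
  have "\<forall>v. \<exists>Gv. \<forall>y\<in>E. ((\<lambda>y. F' y v) has_derivative Gv y) (at y)"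
  proof
    fix v
    have "Ck_on (Suc 0) E (\<lambda>y. F' y v)" using F'2[of v] by simp
    then show "\<exists>Gv. \<forall>y\<in>E. ((\<lambda>y. F' y v) has_derivative Gv y) (at y)"
      by (metis Ck_on.simps(2))
  qed
  then obtain G where G: "\<And>v y. y \<in> E \<Longrightarrow> ((\<lambda>y. F' y v) has_derivative G v y) (at y)"
    by metis
  define gg where "gg r = mu M a r powi (- s) * sqrt (r^2 + a^2)" for r
  define g1 where "g1 r = gg r * L1 M a s r" for r
  have \<Phi>_eq: "\<And>t r \<theta> \<phi>. \<Phi> t r \<theta> \<phi> = of_real (gg r) * \<psi> t r \<theta> \<phi>" by (simp add: \<Phi>_def gg_def)
  have gg_d: "(gg has_real_derivative g1 x) (at x)" if "rplus M a < x" for x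
    unfolding gg_def[abs_def] g1_def using gg_deriv[OF assms(2) that] by (simp add: gg_def)
  have g1_d: "(g1 has_real_derivative (g1 x * L1 M a s x + gg x * L1d M a s x)) (at x)" if "rplus M a < x" for x
  proof -
    have "((\<lambda>r. gg r * L1 M a s r) has_real_derivative (g1 x * L1 M a s x + gg x * L1d M a s x)) (at x)"
      using DERIV_mult[OF gg_d[OF that] L1_deriv[OF assms(2) that, of s]] by (simp add: mult.commute)
    then show ?thesis unfolding g1_def[abs_def] .
  qed
  have h\<psi>t: "((\<lambda>x. \<psi> x r \<theta> \<phi>) has_vector_derivative F' (t,r,\<theta>,\<phi>) (1,0,0,0)) (at t)"
    if "(t,r,\<theta>,\<phi>) \<in> E" for t r \<theta> \<phi>
    using slice_t[OF F'1[OF that]] by (simp add: F_def)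
  have h\<psi>r: "((\<lambda>x. \<psi> t x \<theta> \<phi>) has_vector_derivative F' (t,r,\<theta>,\<phi>) (0,1,0,0)) (at r)"
    if "(t,r,\<theta>,\<phi>) \<in> E" for t r \<theta> \<phi>
    using slice_r[OF F'1[OF that]] by (simp add: F_def)
  have h\<psi>th: "((\<lambda>x. \<psi> t r x \<phi>) has_vector_derivative F' (t,r,\<theta>,\<phi>) (0,0,1,0)) (at \<theta>)"
    if "(t,r,\<theta>,\<phi>) \<in> E" for t r \<theta> \<phi>
    using slice_th[OF F'1[OF that]] by (simp add: F_def)
  have h\<psi>ph: "((\<lambda>x. \<psi> t r \<theta> x) has_vector_derivative F' (t,r,\<theta>,\<phi>) (0,0,0,1)) (at \<phi>)"
    if "(t,r,\<theta>,\<phi>) \<in> E" for t r \<theta> \<phi>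
    using slice_ph[OF F'1[OF that]] by (simp add: F_def)
  have d\<psi>t: "dt \<psi> t r \<theta> \<phi> = F' (t,r,\<theta>,\<phi>) (1,0,0,0)" if "(t,r,\<theta>,\<phi>) \<in> E" for t r \<theta> \<phi>
    unfolding dt_def using vector_derivative_at[OF h\<psi>t[OF that]] .
  have d\<psi>r: "dr \<psi> t r \<theta> \<phi> = F' (t,r,\<theta>,\<phi>) (0,1,0,0)" if "(t,r,\<theta>,\<phi>) \<in> E" for t r \<theta> \<phi>
    unfolding dr_def using vector_derivative_at[OF h\<psi>r[OF that]] .
  have d\<psi>th: "dth \<psi> t r \<theta> \<phi> = F' (t,r,\<theta>,\<phi>) (0,0,1,0)" if "(t,r,\<theta>,\<phi>) \<in> E" for t r \<theta> \<phi>
    unfolding dth_def using vector_derivative_at[OF h\<psi>th[OF that]] .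
  have d\<psi>ph: "dph \<psi> t r \<theta> \<phi> = F' (t,r,\<theta>,\<phi>) (0,0,0,1)" if "(t,r,\<theta>,\<phi>) \<in> E" for t r \<theta> \<phi>
    unfolding dph_def using vector_derivative_at[OF h\<psi>ph[OF that]] .
  have d\<Phi>t: "dt \<Phi> t r \<theta> \<phi> = of_real (gg r) * F' (t,r,\<theta>,\<phi>) (1,0,0,0)" if "(t,r,\<theta>,\<phi>) \<in> E" for t r \<theta> \<phi>
    unfolding dt_def \<Phi>_eq by (rule vector_derivative_at, rule has_vector_derivative_mult_right, rule h\<psi>t[OF that])
  have d\<Phi>th: "dth \<Phi> t r \<theta> \<phi> = of_real (gg r) * F' (t,r,\<theta>,\<phi>) (0,0,1,0)" if "(t,r,\<theta>,\<phi>) \<in> E" for t r \<theta> \<phi>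
    unfolding dth_def \<Phi>_eq by (rule vector_derivative_at, rule has_vector_derivative_mult_right, rule h\<psi>th[OF that])
  have d\<Phi>ph: "dph \<Phi> t r \<theta> \<phi> = of_real (gg r) * F' (t,r,\<theta>,\<phi>) (0,0,0,1)" if "(t,r,\<theta>,\<phi>) \<in> E" for t r \<theta> \<phi>
    unfolding dph_def \<Phi>_eq by (rule vector_derivative_at, rule has_vector_derivative_mult_right, rule h\<psi>ph[OF that])
  have d\<Phi>r: "dr \<Phi> t r \<theta> \<phi> = of_real (gg r) * F' (t,r,\<theta>,\<phi>) (0,1,0,0) + of_real (g1 r) * \<psi> t r \<theta> \<phi>"
    if "(t,r,\<theta>,\<phi>) \<in> E" for t r \<theta> \<phi>
  proof -
    have r: "rplus M a < r" using that memE by blast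
    show ?thesis
      unfolding dr_def \<Phi>_eq
      by (rule vector_derivative_at, rule has_vector_derivative_mult[OF has_vector_derivative_of_real[OF gg_d[OF r]] h\<psi>r[OF that]])
  qed
  have main: "BoxS M a s \<Phi> t0 r0 \<theta>0 \<phi>0 =
       of_real (2 * of_int s * (r0^3 - 3*M*r0^2 + a^2*r0 + a^2*M) / (r0^2 + a^2)^2) * calVhat M a \<Phi> t0 r0 \<theta>0 \<phi>0
     - of_real (2 * (2 * of_int s + 1) * a * r0 / (r0^2 + a^2)) * dph \<Phi> t0 r0 \<theta>0 \<phi>0
     - of_real (2 * of_int s - (2 * of_int s + 1) *
          (2 * (of_int s + 1) * M * r0^3 + a^2 * r0^2 - 2 * (of_int s + 2) * a^2 * M * r0 + a^4)
          / (r0^2 + a^2)^2) * \<Phi> t0 r0 \<theta>0 \<phi>0"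
    if pE: "(t0,r0,\<theta>0,\<phi>0) \<in> E" for t0 r0 \<theta>0 \<phi>0
  proof -
    have r0: "rplus M a < r0" and th0: "0 < \<theta>0" "\<theta>0 < pi" using pE memE by auto
    have D0: "Delta M a r0 > 0" "r0 > 0" using Delta_pos[OF assms(2) r0] by auto
    have A0: "r0^2 + a^2 > 0" using D0 by (simp add: add_pos_nonneg)
    have sin0: "sin \<theta>0 > 0" using sin_gt_zero th0 by blast
    define p where "p = (t0,r0,\<theta>0,\<phi>0)"
    have pE': "p \<in> E" using pE p_def by simp
    have Gp: "((\<lambda>y. F' y v) has_derivative G v p) (at (t0,r0,\<theta>0,\<phi>0))" for v
      using G[OF pE'] p_def by simp
    have Pt: "((\<lambda>x. F' (x,r0,\<theta>0,\<phi>0) v) has_vector_derivative G v p (1,0,0,0)) (at t0)" for v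
      using slice_t[OF Gp] .
    have Pr: "((\<lambda>x. F' (t0,x,\<theta>0,\<phi>0) v) has_vector_derivative G v p (0,1,0,0)) (at r0)" for v
      using slice_r[OF Gp] .
    have Pth: "((\<lambda>x. F' (t0,r0,x,\<phi>0) v) has_vector_derivative G v p (0,0,1,0)) (at \<theta>0)" for v
      using slice_th[OF Gp] .
    have Pph: "((\<lambda>x. F' (t0,r0,\<theta>0,x) v) has_vector_derivative G v p (0,0,0,1)) (at \<phi>0)" for v
      using slice_ph[OF Gp] .
    have sym12: "G (1,0,0,0) p (0,1,0,0) = G (0,1,0,0) p (1,0,0,0)"
      by (rule mixed_sym[OF openE pE' F'1 G[OF pE'] G[OF pE']])
    have sym14: "G (1,0,0,0) p (0,0,0,1) = G (0,0,0,1) p (1,0,0,0)"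
      by (rule mixed_sym[OF openE pE' F'1 G[OF pE'] G[OF pE']])
    have sym24: "G (0,0,0,1) p (0,1,0,0) = G (0,1,0,0) p (0,0,0,1)"
      by (rule mixed_sym[OF openE pE' F'1 G[OF pE'] G[OF pE']])
    have inE_t: "(x,r0,\<theta>0,\<phi>0) \<in> E" for x using pE memE by auto
    have inE_ph: "(t0,r0,\<theta>0,x) \<in> E" for x using pE memE by auto
    have inE_r: "(t0,x,\<theta>0,\<phi>0) \<in> E" if "x \<in> {rplus M a<..}" for x using pE memE that by auto
    have inE_th: "(t0,r0,x,\<phi>0) \<in> E" if "x \<in> {0<..<pi}" for x using pE memE that by auto
    have r0U: "r0 \<in> {rplus M a<..}" using r0 by simp
    have th0U: "\<theta>0 \<in> {0<..<pi}" using th0 by simp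
    let ?c = "\<lambda>x. a / (x^2 + a^2)"
    have v_tt: "dt (dt \<Phi>) t0 r0 \<theta>0 \<phi>0 = of_real (gg r0) * G (1,0,0,0) p (1,0,0,0)"
      unfolding dt_def[of "dt \<Phi>"]
      by (rule vd_all[OF has_vector_derivative_mult_right[OF Pt]]) (simp add: d\<Phi>t[OF inE_t])
    have v_tph: "dt (dph \<Phi>) t0 r0 \<theta>0 \<phi>0 = of_real (gg r0) * G (0,0,0,1) p (1,0,0,0)"
      unfolding dt_def[of "dph \<Phi>"]
      by (rule vd_all[OF has_vector_derivative_mult_right[OF Pt]]) (simp add: d\<Phi>ph[OF inE_t])
    note dVt = has_vector_derivative_add[OF has_vector_derivative_add[OF
        has_vector_derivative_mult_right[OF Pt, of "of_real (gg r0)" "(1,0,0,0)"]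
        has_vector_derivative_mult_right[OF has_vector_derivative_mult_right[OF Pt], of "of_real (?c r0)" "of_real (gg r0)" "(0,0,0,1)"]]
        has_vector_derivative_mult_right[OF has_vector_derivative_add[OF
           has_vector_derivative_mult_right[OF Pt, of "of_real (gg r0)" "(0,1,0,0)"]
           has_vector_derivative_mult_right[OF h\<psi>t[OF pE], of "of_real (g1 r0)"]], of "of_real (mu M a r0)"]]
    have v_Vt: "dt (Vop M a \<Phi>) t0 r0 \<theta>0 \<phi>0 = of_real (gg r0) * G (1,0,0,0) p (1,0,0,0)
        + of_real (?c r0) * (of_real (gg r0) * G (0,0,0,1) p (1,0,0,0))
        + of_real (mu M a r0) * (of_real (gg r0) * G (0,1,0,0) p (1,0,0,0) + of_real (g1 r0) * F' p (1,0,0,0))"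
      unfolding dt_def[of "Vop M a \<Phi>"]
      by (rule vd_all2[OF dVt]) (simp_all add: Vop_def d\<Phi>t[OF inE_t] d\<Phi>ph[OF inE_t] d\<Phi>r[OF inE_t] p_def)
    note dVph = has_vector_derivative_add[OF has_vector_derivative_add[OF
        has_vector_derivative_mult_right[OF Pph, of "of_real (gg r0)" "(1,0,0,0)"]
        has_vector_derivative_mult_right[OF has_vector_derivative_mult_right[OF Pph], of "of_real (?c r0)" "of_real (gg r0)" "(0,0,0,1)"]]
        has_vector_derivative_mult_right[OF has_vector_derivative_add[OF
           has_vector_derivative_mult_right[OF Pph, of "of_real (gg r0)" "(0,1,0,0)"]
           has_vector_derivative_mult_right[OF h\<psi>ph[OF pE], of "of_real (g1 r0)"]], of "of_real (mu M a r0)"]]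
    have v_Vph: "dph (Vop M a \<Phi>) t0 r0 \<theta>0 \<phi>0 = of_real (gg r0) * G (1,0,0,0) p (0,0,0,1)
        + of_real (?c r0) * (of_real (gg r0) * G (0,0,0,1) p (0,0,0,1))
        + of_real (mu M a r0) * (of_real (gg r0) * G (0,1,0,0) p (0,0,0,1) + of_real (g1 r0) * F' p (0,0,0,1))"
      unfolding dph_def[of "Vop M a \<Phi>"]
      by (rule vd_all2[OF dVph]) (simp_all add: Vop_def d\<Phi>t[OF inE_ph] d\<Phi>ph[OF inE_ph] d\<Phi>r[OF inE_ph] p_def)
    have gd0: "((\<lambda>x. complex_of_real (gg x)) has_vector_derivative of_real (g1 r0)) (at r0)"
      by (rule has_vector_derivative_of_real[OF gg_d[OF r0]])
    have g1d0: "((\<lambda>x. complex_of_real (g1 x)) has_vector_derivative of_real (g1 r0 * L1 M a s r0 + gg r0 * L1d M a s r0)) (at r0)"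
      by (rule has_vector_derivative_of_real[OF g1_d[OF r0]])
    have cd0: "((\<lambda>x. complex_of_real (?c x)) has_vector_derivative of_real (-2*a*r0/(r0^2+a^2)^2)) (at r0)"
      by (rule has_vector_derivative_of_real[OF c_deriv[OF D0(2)]])
    have mud0: "((\<lambda>x. complex_of_real (mu M a x)) has_vector_derivative
        of_real (((2*r0-2*M)*(r0^2+a^2) - Delta M a r0*(2*r0))/(r0^2+a^2)^2)) (at r0)"
      by (rule has_vector_derivative_of_real[OF mu_deriv[OF D0(2)]])
    note dVr = has_vector_derivative_add[OF has_vector_derivative_add[OF
        has_vector_derivative_mult[OF gd0 Pr[of "(1,0,0,0)"]]
        has_vector_derivative_mult[OF cd0 has_vector_derivative_mult[OF gd0 Pr[of "(0,0,0,1)"]]]]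
        has_vector_derivative_mult[OF mud0 has_vector_derivative_add[OF
           has_vector_derivative_mult[OF gd0 Pr[of "(0,1,0,0)"]]
           has_vector_derivative_mult[OF g1d0 h\<psi>r[OF pE]]]]]
    have v_Vr: "dr (Vop M a \<Phi>) t0 r0 \<theta>0 \<phi>0 =
         (of_real (gg r0) * G (1,0,0,0) p (0,1,0,0) + of_real (g1 r0) * F' p (1,0,0,0))
       + (of_real (?c r0) * (of_real (gg r0) * G (0,0,0,1) p (0,1,0,0) + of_real (g1 r0) * F' p (0,0,0,1))
          + of_real (-2*a*r0/(r0^2+a^2)^2) * (of_real (gg r0) * F' p (0,0,0,1)))
       + (of_real (mu M a r0) * ((of_real (gg r0) * G (0,1,0,0) p (0,1,0,0) + of_real (g1 r0) * F' p (0,1,0,0))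
            + (of_real (g1 r0) * F' p (0,1,0,0) + of_real (g1 r0 * L1 M a s r0 + gg r0 * L1d M a s r0) * \<psi> t0 r0 \<theta>0 \<phi>0))
          + of_real (((2*r0-2*M)*(r0^2+a^2) - Delta M a r0*(2*r0))/(r0^2+a^2)^2)
            * (of_real (gg r0) * F' p (0,1,0,0) + of_real (g1 r0) * \<psi> t0 r0 \<theta>0 \<phi>0))"
      unfolding dr_def[of "Vop M a \<Phi>"]
      by (rule vd_local2[OF dVr open_greaterThan r0U])
         (simp_all add: Vop_def d\<Phi>t[OF inE_r] d\<Phi>ph[OF inE_r] d\<Phi>r[OF inE_r] p_def)
    have sinne: "sin \<theta>0 \<noteq> 0" using sin0 by simp
    have invsin_d: "((\<lambda>x. \<i> * complex_of_real (1 / sin x)) has_vector_derivative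
        \<i> * of_real ((0 * sin \<theta>0 - 1 * cos \<theta>0) / (sin \<theta>0 * sin \<theta>0))) (at \<theta>0)"
      by (rule has_vector_derivative_mult_right, rule has_vector_derivative_of_real,
          rule DERIV_divide[OF DERIV_const DERIV_sin sinne])
    have cot_d: "((\<lambda>x. of_int s * complex_of_real (cos x / sin x)) has_vector_derivative
        of_int s * of_real ((- sin \<theta>0 * sin \<theta>0 - cos \<theta>0 * cos \<theta>0) / (sin \<theta>0 * sin \<theta>0))) (at \<theta>0)"
      by (rule has_vector_derivative_mult_right, rule has_vector_derivative_of_real,
          rule DERIV_divide[OF DERIV_cos DERIV_sin sinne])
    note dEth = has_vector_derivative_add[OF has_vector_derivative_diff[OF Pth[of "(0,0,1,0)"]
        has_vector_derivative_mult[OF invsin_d Pth[of "(0,0,0,1)"]]]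
        has_vector_derivative_mult[OF cot_d h\<psi>th[OF pE]]]
    have eth'\<Phi>: "eth' s \<Phi> t r \<theta> \<phi> = of_real (gg r) * eth' s \<psi> t r \<theta> \<phi>" if "(t,r,\<theta>,\<phi>) \<in> E" for t r \<theta> \<phi>
      by (simp add: eth'_def d\<Phi>th[OF that] d\<Phi>ph[OF that] d\<psi>th[OF that] d\<psi>ph[OF that] \<Phi>_eq algebra_simps)
    have v_eth_th: "dth (eth' s \<Phi>) t0 r0 \<theta>0 \<phi>0 = of_real (gg r0) * dth (eth' s \<psi>) t0 r0 \<theta>0 \<phi>0"
      unfolding dth_def[of "eth' s \<Phi>"] dth_def[of "eth' s \<psi>"]
      apply (rule vd_scale[OF dEth open_greaterThanLessThan th0U])
       apply (simp add: eth'_def d\<psi>th[OF inE_th] d\<psi>ph[OF inE_th] cot_def)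
      apply (simp add: eth'\<Phi>[OF inE_th])
      done
    note dEph = has_vector_derivative_add[OF has_vector_derivative_diff[OF Pph[of "(0,0,1,0)"]
        has_vector_derivative_mult_right[OF Pph[of "(0,0,0,1)"], of "\<i> * complex_of_real (1 / sin \<theta>0)"]]
        has_vector_derivative_mult_right[OF h\<psi>ph[OF pE], of "of_int s * complex_of_real (cot \<theta>0)"]]
    have v_eth_ph: "dph (eth' s \<Phi>) t0 r0 \<theta>0 \<phi>0 = of_real (gg r0) * dph (eth' s \<psi>) t0 r0 \<theta>0 \<phi>0"
      unfolding dph_def[of "eth' s \<Phi>"] dph_def[of "eth' s \<psi>"]
      apply (rule vd_scale[OF dEph open_UNIV UNIV_I])
       apply (simp add: eth'_def d\<psi>th[OF inE_ph] d\<psi>ph[OF inE_ph])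
      apply (simp add: eth'\<Phi>[OF inE_ph])
      done
    have v_ethSq: "ethSq s \<Phi> t0 r0 \<theta>0 \<phi>0 = of_real (gg r0) * ethSq s \<psi> t0 r0 \<theta>0 \<phi>0"
      unfolding ethSq_def eth_def v_eth_th v_eth_ph eth'\<Phi>[OF pE] by (simp add: algebra_simps)
    have v_\<psi>tt: "dt (dt \<psi>) t0 r0 \<theta>0 \<phi>0 = G (1,0,0,0) p (1,0,0,0)"
      unfolding dt_def[of "dt \<psi>"] by (rule vd_all2[OF Pt]) (simp_all add: d\<psi>t[OF inE_t])
    have v_\<psi>tph: "dt (dph \<psi>) t0 r0 \<theta>0 \<phi>0 = G (0,0,0,1) p (1,0,0,0)"
      unfolding dt_def[of "dph \<psi>"] by (rule vd_all2[OF Pt]) (simp_all add: d\<psi>ph[OF inE_t])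
    have v_\<psi>phph: "dph (dph \<psi>) t0 r0 \<theta>0 \<phi>0 = G (0,0,0,1) p (0,0,0,1)"
      unfolding dph_def[of "dph \<psi>"] by (rule vd_all2[OF Pph]) (simp_all add: d\<psi>ph[OF inE_ph])
    have Dd0: "((\<lambda>x. complex_of_real (Delta M a x)) has_vector_derivative of_real (2*r0 - 2*M)) (at r0)"
      by (rule has_vector_derivative_of_real, rule Delta_deriv_eq[OF refl])
    have v_\<psi>rr: "dr (\<lambda>t r \<theta> \<phi>. of_real (Delta M a r) * dr \<psi> t r \<theta> \<phi>) t0 r0 \<theta>0 \<phi>0
        = of_real (Delta M a r0) * G (0,1,0,0) p (0,1,0,0) + of_real (2*r0 - 2*M) * F' p (0,1,0,0)"
      unfolding dr_def[of "\<lambda>t r \<theta> \<phi>. of_real (Delta M a r) * dr \<psi> t r \<theta> \<phi>"]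
      by (rule vd_local2[OF has_vector_derivative_mult[OF Dd0 Pr] open_greaterThan r0U])
         (simp_all add: d\<psi>r[OF inE_r] p_def)
    have T0: "Teuk M a s \<psi> t0 r0 \<theta>0 \<phi>0 = 0" using assms(5) pE unfolding E_def by auto
    show ?thesis
    proof (rule final_alg[where R="of_real r0" and a="of_real a" and M="of_real M" and sv="of_int s"
        and S="of_real (sin \<theta>0)" and C="of_real (cos \<theta>0)" and gz="of_real (gg r0)"
        and wz="\<psi> t0 r0 \<theta>0 \<phi>0" and pa="F' p (1,0,0,0)" and pb="F' p (0,1,0,0)" and pd="F' p (0,0,0,1)"
        and qaa="G (1,0,0,0) p (1,0,0,0)" and qab="G (0,1,0,0) p (1,0,0,0)" and qad="G (0,0,0,1) p (1,0,0,0)"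
        and qbb="G (0,1,0,0) p (0,1,0,0)" and qbd="G (0,1,0,0) p (0,0,0,1)" and qdd="G (0,0,0,1) p (0,0,0,1)"
        and E="ethSq s \<psi> t0 r0 \<theta>0 \<phi>0" and AA="of_real (r0^2+a^2)" and DD="of_real (Delta M a r0)"
        and LLa="of_real (L1 M a s r0)" and LLad="of_real (L1d M a s r0)" and gy="of_real (g1 r0)"
        and gx="of_real (g1 r0 * L1 M a s r0 + gg r0 * L1d M a s r0)"
        and V="Vop M a \<Phi> t0 r0 \<theta>0 \<phi>0" and dtV="dt (Vop M a \<Phi>) t0 r0 \<theta>0 \<phi>0"
        and dphV="dph (Vop M a \<Phi>) t0 r0 \<theta>0 \<phi>0" and drV="dr (Vop M a \<Phi>) t0 r0 \<theta>0 \<phi>0"])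
      show "complex_of_real (Delta M a r0) \<noteq> 0" using D0 by simp
      show "complex_of_real (r0^2+a^2) \<noteq> 0" using A0 of_real_eq_0_iff by (metis less_irrefl)
      show "complex_of_real (r0^2+a^2) = (of_real r0)^2 + (of_real a)^2" by simp
      show "complex_of_real (Delta M a r0) = (of_real r0)^2 - 2 * of_real M * of_real r0 + (of_real a)^2"
        by (simp add: Delta_def)
      show "complex_of_real (L1 M a s r0) = - of_int s * (2 * of_real r0 - 2 * of_real M) / of_real (Delta M a r0)
          + (2 * of_int s + 1) * of_real r0 / of_real (r0^2+a^2)"
        by (simp add: L1_def)
      show "complex_of_real (L1d M a s r0) = - of_int s * (2 * of_real (Delta M a r0) - (2 * of_real r0 - 2 * of_real M)^2) / (of_real (Delta M a r0))^2
          + (2 * of_int s + 1) * (of_real (r0^2+a^2) - 2 * (of_real r0)^2) / (of_real (r0^2+a^2))^2"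
        by (simp add: L1d_def)
      show "complex_of_real (g1 r0) = of_real (gg r0) * of_real (L1 M a s r0)" by (simp add: g1_def)
      show "complex_of_real (g1 r0 * L1 M a s r0 + gg r0 * L1d M a s r0) = of_real (g1 r0) * of_real (L1 M a s r0) + of_real (gg r0) * of_real (L1d M a s r0)"
        by simp
      show "Vop M a \<Phi> t0 r0 \<theta>0 \<phi>0 = of_real (gg r0) * F' p (1,0,0,0) + (of_real a / of_real (r0^2+a^2)) * (of_real (gg r0) * F' p (0,0,0,1))
          + (of_real (Delta M a r0) / of_real (r0^2+a^2)) * (of_real (gg r0) * F' p (0,1,0,0) + of_real (g1 r0) * \<psi> t0 r0 \<theta>0 \<phi>0)"
        by (simp add: Vop_def d\<Phi>t[OF pE] d\<Phi>ph[OF pE] d\<Phi>r[OF pE] mu_def p_def)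
      show "dt (Vop M a \<Phi>) t0 r0 \<theta>0 \<phi>0 = of_real (gg r0) * G (1,0,0,0) p (1,0,0,0) + (of_real a / of_real (r0^2+a^2)) * (of_real (gg r0) * G (0,0,0,1) p (1,0,0,0))
          + (of_real (Delta M a r0) / of_real (r0^2+a^2)) * (of_real (gg r0) * G (0,1,0,0) p (1,0,0,0) + of_real (g1 r0) * F' p (1,0,0,0))"
        by (simp add: v_Vt mu_def)
      show "dph (Vop M a \<Phi>) t0 r0 \<theta>0 \<phi>0 = of_real (gg r0) * G (0,0,0,1) p (1,0,0,0) + (of_real a / of_real (r0^2+a^2)) * (of_real (gg r0) * G (0,0,0,1) p (0,0,0,1))
          + (of_real (Delta M a r0) / of_real (r0^2+a^2)) * (of_real (gg r0) * G (0,1,0,0) p (0,0,0,1) + of_real (g1 r0) * F' p (0,0,0,1))"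
        by (simp add: v_Vph mu_def sym14)
      show "dr (Vop M a \<Phi>) t0 r0 \<theta>0 \<phi>0 = (of_real (gg r0) * G (0,1,0,0) p (1,0,0,0) + of_real (g1 r0) * F' p (1,0,0,0))
          + ((of_real a / of_real (r0^2+a^2)) * (of_real (gg r0) * G (0,1,0,0) p (0,0,0,1) + of_real (g1 r0) * F' p (0,0,0,1))
             + (-2 * of_real a * of_real r0 / (of_real (r0^2+a^2))^2) * (of_real (gg r0) * F' p (0,0,0,1)))
          + ((of_real (Delta M a r0) / of_real (r0^2+a^2)) * ((of_real (gg r0) * G (0,1,0,0) p (0,1,0,0) + of_real (g1 r0) * F' p (0,1,0,0))
               + (of_real (g1 r0) * F' p (0,1,0,0) + of_real (g1 r0 * L1 M a s r0 + gg r0 * L1d M a s r0) * \<psi> t0 r0 \<theta>0 \<phi>0))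
             + (((2 * of_real r0 - 2 * of_real M) * of_real (r0^2+a^2) - of_real (Delta M a r0) * 2 * of_real r0) / (of_real (r0^2+a^2))^2)
               * (of_real (gg r0) * F' p (0,1,0,0) + of_real (g1 r0) * \<psi> t0 r0 \<theta>0 \<phi>0))"
        by (simp add: v_Vr mu_def sym12[unfolded p_def] sym24[unfolded p_def] p_def mult.assoc)
      show "BoxS M a s \<Phi> t0 r0 \<theta>0 \<phi>0 = - of_real (r0^2+a^2) * ((of_real (r0^2+a^2) / of_real (Delta M a r0)) * dt (Vop M a \<Phi>) t0 r0 \<theta>0 \<phi>0
            + (of_real a / of_real (Delta M a r0)) * dph (Vop M a \<Phi>) t0 r0 \<theta>0 \<phi>0 - dr (Vop M a \<Phi>) t0 r0 \<theta>0 \<phi>0)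
          + of_real (gg r0) * ethSq s \<psi> t0 r0 \<theta>0 \<phi>0 + 2 * of_real a * (of_real (gg r0) * G (0,0,0,1) p (1,0,0,0))
          + (of_real a)^2 * (of_real (sin \<theta>0))^2 * (of_real (gg r0) * G (1,0,0,0) p (1,0,0,0))
          - 2 * \<i> * of_real a * of_int s * of_real (cos \<theta>0) * (of_real (gg r0) * F' p (1,0,0,0))"
        by (simp add: BoxS_def Yop_def v_tt v_tph v_ethSq d\<Phi>t[OF pE] p_def)
      show "of_real (2 * of_int s * (r0^3 - 3*M*r0^2 + a^2*r0 + a^2*M) / (r0^2 + a^2)^2) * calVhat M a \<Phi> t0 r0 \<theta>0 \<phi>0
          - of_real (2 * (2 * of_int s + 1) * a * r0 / (r0^2 + a^2)) * dph \<Phi> t0 r0 \<theta>0 \<phi>0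
          - of_real (2 * of_int s - (2 * of_int s + 1) *
             (2 * (of_int s + 1) * M * r0^3 + a^2 * r0^2 - 2 * (of_int s + 2) * a^2 * M * r0 + a^4)
             / (r0^2 + a^2)^2) * \<Phi> t0 r0 \<theta>0 \<phi>0
        = (2 * of_int s * ((of_real r0)^3 - 3 * of_real M * (of_real r0)^2 + (of_real a)^2 * of_real r0 + (of_real a)^2 * of_real M) / (of_real (r0^2+a^2))^2)
            * (of_real (r0^2+a^2) * (of_real (r0^2+a^2) / of_real (Delta M a r0)) * Vop M a \<Phi> t0 r0 \<theta>0 \<phi>0)
          - (2 * (2 * of_int s + 1) * of_real a * of_real r0 / of_real (r0^2+a^2)) * (of_real (gg r0) * F' p (0,0,0,1))
          - (2 * of_int s - (2 * of_int s + 1) * (2 * (of_int s + 1) * of_real M * (of_real r0)^3 + (of_real a)^2 * (of_real r0)^2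
              - 2 * (of_int s + 2) * (of_real a)^2 * of_real M * of_real r0 + (of_real a)^4) / (of_real (r0^2+a^2))^2)
            * (of_real (gg r0) * \<psi> t0 r0 \<theta>0 \<phi>0)"
        by (simp add: calVhat_def Vhat_def d\<Phi>ph[OF pE] \<Phi>_eq mu_def p_def)
      have "- (((of_real (r0^2+a^2))^2 - (of_real a)^2 * (of_real (sin \<theta>0))^2 * of_real (Delta M a r0)) / of_real (Delta M a r0)) * G (1,0,0,0) p (1,0,0,0)
          + (of_real (Delta M a r0) * G (0,1,0,0) p (0,1,0,0) + (2 * of_real r0 - 2 * of_real M) * F' p (0,1,0,0))
          - (4 * of_real a * of_real M * of_real r0 / of_real (Delta M a r0)) * G (0,0,0,1) p (1,0,0,0)
          - ((of_real a)^2 / of_real (Delta M a r0)) * G (0,0,0,1) p (0,0,0,1) + ethSq s \<psi> t0 r0 \<theta>0 \<phi>0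
          - 2 * \<i> * of_real a * of_int s * of_real (cos \<theta>0) * F' p (1,0,0,0)
          + 2 * of_int s * ((of_real r0 - of_real M) * ((of_real (r0^2+a^2) / of_real (Delta M a r0)) * F' p (1,0,0,0)
              + (of_real a / of_real (Delta M a r0)) * F' p (0,0,0,1) - F' p (0,1,0,0)) - 2 * of_real r0 * F' p (1,0,0,0)) = Teuk M a s \<psi> t0 r0 \<theta>0 \<phi>0"
        by (simp add: Teuk_def Yop_def v_\<psi>tt v_\<psi>tph v_\<psi>phph v_\<psi>rr d\<psi>t[OF pE] d\<psi>ph[OF pE] d\<psi>r[OF pE] p_def)
      then show "- (((of_real (r0^2+a^2))^2 - (of_real a)^2 * (of_real (sin \<theta>0))^2 * of_real (Delta M a r0)) / of_real (Delta M a r0)) * G (1,0,0,0) p (1,0,0,0)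
          + (of_real (Delta M a r0) * G (0,1,0,0) p (0,1,0,0) + (2 * of_real r0 - 2 * of_real M) * F' p (0,1,0,0))
          - (4 * of_real a * of_real M * of_real r0 / of_real (Delta M a r0)) * G (0,0,0,1) p (1,0,0,0)
          - ((of_real a)^2 / of_real (Delta M a r0)) * G (0,0,0,1) p (0,0,0,1) + ethSq s \<psi> t0 r0 \<theta>0 \<phi>0
          - 2 * \<i> * of_real a * of_int s * of_real (cos \<theta>0) * F' p (1,0,0,0)
          + 2 * of_int s * ((of_real r0 - of_real M) * ((of_real (r0^2+a^2) / of_real (Delta M a r0)) * F' p (1,0,0,0)
              + (of_real a / of_real (Delta M a r0)) * F' p (0,0,0,1) - F' p (0,1,0,0)) - 2 * of_real r0 * F' p (1,0,0,0)) = 0" using T0 by simp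
    qed

  qed
  show ?thesis using main unfolding E_def by auto
qed

end
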